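(* In any execution of $\mathcal{U}$, suppose that at time $T$ a process $p$ executes line 12 for an operation $o$ and this GCAS returns true, and at a time $T' > T$ a process $p'$ executes line 12 also for $o$, in some iteration of the while loop. Then $p'$ executed line 5 in that same iteration at some time $T_1 < T$.
   Context: Model: an asynchronous shared-memory system with possibly infinitely many processes, any of which may crash, communicating via atomic shared objects. A fetch-and-increment (F\&I) object stores an integer; F\&I$(C)$ atomically returns the current value and increments it. A generalized-compare-and-swap (GCAS) object $O$ stores a value and supports Read$(O)$ and GCAS$(c, O, v_1, v_2)$, which atomically does: if $c(\text{current value of } O, v_1)$ holds then set $O := v_2$ and return true, else return false. Tuples are compared componentwise for $=$; GCAS$(>, A, (t,-,-), v)$ succeeds iff the time field of $A$ is strictly greater than $t$. Implemented type $\mathcal{T} = (OP, RES, Q, \delta)$ with initial state $s_0$; a procedure $apply_{\mathcal{T}}(o,s)$ returns some $(s',r)$ with $(s,o,s',r)\in\delta$. $NULL$ is a value different from every response of $\mathcal{T}$, and $NOOP$ is a name different from every operation of $\mathcal{T}$. Algorithm $\mathcal{U}$: each process $p$ owns a GCAS object $H_p$ with fields $(time, response)$. Shared objects: F\&I object $C$, initially $1$; GCAS object $A$ with fields $(time, op, ptr)$, initially $(0, NOOP, h(NOOP))$, where $h(NOOP)$ is a pointer to an immutable location containing $(0,\perp)$; GCAS object $S$ with fields $(time, state, response, ptr)$, initially $(0, s_0, \perp, h(NOOP))$. Process $p$ performs operation $o$ by calling DoOp$(o)$: (1) DoOp$(o)$ invoked; (2) $t := $ F\&I$(C)$; (3)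 $H_p := (t, NULL)$; (4) while $H_p = (t, NULL)$ do: (5) $(t^*, s^*, r^*, roptr^* ) := S$; (6) GCAS$(=, *roptr^*, (t^*, NULL), (t^*, r^* ))$; (7) GCAS$(>, A, (t,-,-), (t, o, \&H_p))$; (8) $(t', o', roptr') := A$; (9) $(\hat t, \hat r) := *roptr'$; (10) if $(\hat t,\hat r) = (t', NULL)$ then (11) $(s', r') := apply_{\mathcal{T}}(o', s^* )$; (12) GCAS$(=, S, (t^*,s^*,r^*,roptr^* ), (t', s', r', roptr'))$; (13) else GCAS$(=, A, (t', o', roptr'), (t, o, \&H_p))$; end while; (14) return $H_p.response$. Notation: an "operation" $o$ means one invocation of DoOp$(o)$ (or the initial $NOOP$). $p(o)$ is the process executing it; $t(o)$ is the value returned by its F\&I at line 2, or $\infty$ if line 2 has not been executed; $h(o)$ is $H_{p(o)}$. For $NOOP$: $t(NOOP)=0$ and $h(NOOP)$ is the immutable location containing $(0,\perp)$. "Line 12 is executed for $o$" means the new value written in that GCAS has the form $(t(o), -, r, h(o))$ (equivalently, the process read $(t(o), o, h(o))$ from $A$ at line 8 in that iteration). *)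

theory Defs
  imports Main
begin

section \<open>Model of algorithm U (one atomic shared-memory step per line)\<close>

datatype 'r rval = Null | Bot | Resp 'r

datatype 'o opname = NOOP | Op 'o

text \<open>Pointers to response locations: h(NOOP) (immutable, contains (0,Bot)) or H_q.\<close>
datatype 'p ptr = HNoop | HProc 'p

text \<open>Program counter: Idle (no pending DoOp) or the next line to be executed.\<close>
datatype pcv = Idle | L2 | L3 | L4 | L5 | L6 | L7 | L8 | L9 | L10 | L11 | L12 | L13 | L14

record ('o,'s,'r,'p) loc =
  pc   :: pcv
  opv  :: 'o            \<comment> \<open>argument o of DoOp\<close>
  tv   :: nat
  tS   :: nat           \<comment> \<open>t*\<close>
  sS   :: 's            \<comment> \<open>s*\<close>
  rS   :: "'r rval"     \<comment> \<open>r*\<close>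
  pS   :: "'p ptr"      \<comment> \<open>roptr*\<close>
  tA   :: nat           \<comment> \<open>t'\<close>
  oA   :: "'o opname"   \<comment> \<open>o'\<close>
  pA   :: "'p ptr"      \<comment> \<open>roptr'\<close>
  th   :: nat           \<comment> \<open>t hat\<close>
  rh   :: "'r rval"     \<comment> \<open>r hat\<close>
  sN   :: 's            \<comment> \<open>s'\<close>
  rN   :: 'r            \<comment> \<open>r'\<close>

record ('o,'s,'r,'p) conf =
  Cv  :: nat
  Av  :: "nat \<times> 'o opname \<times> 'p ptr"
  Sv  :: "nat \<times> 's \<times> 'r rval \<times> 'p ptr"
  Hv  :: "'p \<Rightarrow> nat \<times> 'r rval"
  lc  :: "'p \<Rightarrow> ('o,'s,'r,'p) loc"

definition deref :: "('p \<Rightarrow> nat \<times> 'r rval) \<Rightarrow> 'p ptr \<Rightarrow> nat \<times> 'r rval" where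
  "deref H x = (case x of HNoop \<Rightarrow> (0, Bot) | HProc q \<Rightarrow> H q)"

definition setloc :: "('o,'s,'r,'p) conf \<Rightarrow> 'p \<Rightarrow> ('o,'s,'r,'p) loc \<Rightarrow> ('o,'s,'r,'p) conf" where
  "setloc c p l = c\<lparr>lc := (lc c)(p := l)\<rparr>"

text \<open>One atomic step of process p; \<open>\<delta>\<close> is the transition relation of T
  (line 11 may return any (s',r') with \<open>(s*, o', s', r') \<in> \<delta>\<close>).\<close>
definition ustep :: "('s \<times> 'o \<times> 's \<times> 'r) set \<Rightarrow> 'p \<Rightarrow> ('o,'s,'r,'p) conf \<Rightarrow> ('o,'s,'r,'p) conf \<Rightarrow> bool" where
  "ustep \<delta> p c c' \<longleftrightarrow> (let l = lc c p in
     case pc l of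
       Idle \<Rightarrow> (\<exists>x. c' = setloc c p (l\<lparr>pc := L2, opv := x\<rparr>))
     | L2 \<Rightarrow> c' = (setloc c p (l\<lparr>pc := L3, tv := Cv c\<rparr>))\<lparr>Cv := Cv c + 1\<rparr>
     | L3 \<Rightarrow> c' = (setloc c p (l\<lparr>pc := L4\<rparr>))\<lparr>Hv := (Hv c)(p := (tv l, Null))\<rparr>
     | L4 \<Rightarrow> c' = setloc c p (l\<lparr>pc := (if Hv c p = (tv l, Null) then L5 else L14)\<rparr>)
     | L5 \<Rightarrow> (case Sv c of (t1, s1, r1, p1) \<Rightarrow>
               c' = setloc c p (l\<lparr>pc := L6, tS := t1, sS := s1, rS := r1, pS := p1\<rparr>))
     | L6 \<Rightarrow> c' = (setloc c p (l\<lparr>pc := L7\<rparr>))\<lparr>Hv :=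
               (case pS l of HNoop \<Rightarrow> Hv c
                | HProc q \<Rightarrow> (if Hv c q = (tS l, Null) then (Hv c)(q := (tS l, rS l)) else Hv c))\<rparr>
     | L7 \<Rightarrow> c' = (setloc c p (l\<lparr>pc := L8\<rparr>))\<lparr>Av :=
               (if fst (Av c) > tv l then (tv l, Op (opv l), HProc p) else Av c)\<rparr>
     | L8 \<Rightarrow> (case Av c of (t1, o1, p1) \<Rightarrow>
               c' = setloc c p (l\<lparr>pc := L9, tA := t1, oA := o1, pA := p1\<rparr>))
     | L9 \<Rightarrow> (case deref (Hv c) (pA l) of (t1, r1) \<Rightarrow>
               c' = setloc c p (l\<lparr>pc := L10, th := t1, rh := r1\<rparr>))
     | L10 \<Rightarrow> c' = setloc c p (l\<lparr>pc := (if (th l, rh l) = (tA l, Null) then L11 else L13)\<rparr>)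
     | L11 \<Rightarrow> (\<exists>x s1 r1. oA l = Op x \<and> (sS l, x, s1, r1) \<in> \<delta> \<and>
               c' = setloc c p (l\<lparr>pc := L12, sN := s1, rN := r1\<rparr>))
     | L12 \<Rightarrow> c' = (setloc c p (l\<lparr>pc := L4\<rparr>))\<lparr>Sv :=
               (if Sv c = (tS l, sS l, rS l, pS l) then (tA l, sN l, Resp (rN l), pA l) else Sv c)\<rparr>
     | L13 \<Rightarrow> c' = (setloc c p (l\<lparr>pc := L4\<rparr>))\<lparr>Av :=
               (if Av c = (tA l, oA l, pA l) then (tv l, Op (opv l), HProc p) else Av c)\<rparr>
     | L14 \<Rightarrow> c' = setloc c p (l\<lparr>pc := Idle\<rparr>))"

text \<open>Initial configuration (H_p and the local variables other than pc are arbitrary).\<close>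
definition uinit :: "'s \<Rightarrow> ('o,'s,'r,'p) conf \<Rightarrow> bool" where
  "uinit s0 c \<longleftrightarrow> Cv c = 1 \<and> Av c = (0, NOOP, HNoop) \<and> Sv c = (0, s0, Bot, HNoop)
                  \<and> (\<forall>p. pc (lc c p) = Idle)"

text \<open>An execution prefix of length n: configurations \<open>\<sigma> 0, ..., \<sigma> n\<close>;
  step i (at time i) is taken by process \<open>sch i\<close>. Crashed processes simply take no more steps.\<close>
definition uexec :: "('s \<times> 'o \<times> 's \<times> 'r) set \<Rightarrow> 's \<Rightarrow> (nat \<Rightarrow> ('o,'s,'r,'p) conf) \<Rightarrow> (nat \<Rightarrow> 'p) \<Rightarrow> nat \<Rightarrow> bool" where
  "uexec \<delta> s0 \<sigma> sch n \<longleftrightarrow> uinit s0 (\<sigma> 0) \<and> (\<forall>i<n. ustep \<delta> (sch i) (\<sigma> i) (\<sigma> (Suc i)))"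

definition exec_line :: "(nat \<Rightarrow> ('o,'s,'r,'p) conf) \<Rightarrow> (nat \<Rightarrow> 'p) \<Rightarrow> nat \<Rightarrow> 'p \<Rightarrow> pcv \<Rightarrow> bool" where
  "exec_line \<sigma> sch i p k \<longleftrightarrow> sch i = p \<and> pc (lc (\<sigma> i) p) = k"

text \<open>Operations: the initial NOOP, or the DoOp invocation of process q whose F&I returned t.\<close>
datatype 'p operation = OpNOOP | Inv 'p nat

fun t_of :: "'p operation \<Rightarrow> nat" where
  "t_of OpNOOP = 0" | "t_of (Inv q t) = t"

fun h_of :: "'p operation \<Rightarrow> 'p ptr" where
  "h_of OpNOOP = HNoop" | "h_of (Inv q t) = HProc q"

definition is_operation :: "(nat \<Rightarrow> ('o,'s,'r,'p) conf) \<Rightarrow> (nat \<Rightarrow> 'p) \<Rightarrow> nat \<Rightarrow> 'p operation \<Rightarrow> bool" where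
  "is_operation \<sigma> sch n op \<longleftrightarrow> (case op of OpNOOP \<Rightarrow> True
      | Inv q t \<Rightarrow> (\<exists>i<n. exec_line \<sigma> sch i q L2 \<and> Cv (\<sigma> i) = t))"

text \<open>Line 12 is executed at time i by p for o: the new value written has the form (t(o),-,r,h(o)).\<close>
definition line12_for :: "(nat \<Rightarrow> ('o,'s,'r,'p) conf) \<Rightarrow> (nat \<Rightarrow> 'p) \<Rightarrow> nat \<Rightarrow> 'p \<Rightarrow> 'p operation \<Rightarrow> bool" where
  "line12_for \<sigma> sch i p op \<longleftrightarrow> exec_line \<sigma> sch i p L12 \<and>
      tA (lc (\<sigma> i) p) = t_of op \<and> pA (lc (\<sigma> i) p) = h_of op"

definition gcas12_true :: "(nat \<Rightarrow> ('o,'s,'r,'p) conf) \<Rightarrow> nat \<Rightarrow> 'p \<Rightarrow> bool" where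
  "gcas12_true \<sigma> i p \<longleftrightarrow> (let l = lc (\<sigma> i) p in Sv (\<sigma> i) = (tS l, sS l, rS l, pS l))"

end

theory Submission
  imports Defs
begin


definition inv_ia :: "('o,'s,'r,'p) conf \<Rightarrow> bool" where
  "inv_ia c \<longleftrightarrow> fst (Av c) < Cv c"

definition inv_ib :: "('o,'s,'r,'p) conf \<Rightarrow> bool" where
  "inv_ib c \<longleftrightarrow> fst (Sv c) < Cv c"

definition inv_ic :: "('o,'s,'r,'p) conf \<Rightarrow> bool" where
  "inv_ic c \<longleftrightarrow> (\<forall>x. pc (lc c x) \<notin> {Idle, L2} \<longrightarrow> tv (lc c x) < Cv c)"

definition inv_id :: "('o,'s,'r,'p) conf \<Rightarrow> bool" where
  "inv_id c \<longleftrightarrow> (\<forall>x. pc (lc c x) \<in> {L9,L10,L11,L12} \<longrightarrow> tA (lc c x) < Cv c)"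

definition inv_ie :: "('o,'s,'r,'p) conf \<Rightarrow> bool" where
  "inv_ie c \<longleftrightarrow> (\<forall>x. pc (lc c x) \<in> {L6,L7,L8,L9,L10,L11,L12} \<longrightarrow> tS (lc c x) < Cv c)"

definition inv_kA :: "('o,'s,'r,'p) conf \<Rightarrow> bool" where
  "inv_kA c \<longleftrightarrow> (\<forall>q. snd (snd (Av c)) = HProc q \<longrightarrow> \<not> (pc (lc c q) = L3 \<and> tv (lc c q) = fst (Av c)))"

definition inv_kS :: "('o,'s,'r,'p) conf \<Rightarrow> bool" where
  "inv_kS c \<longleftrightarrow> (\<forall>q. snd (snd (snd (Sv c))) = HProc q \<longrightarrow> \<not> (pc (lc c q) = L3 \<and> tv (lc c q) = fst (Sv c)))"

definition inv_kL :: "('o,'s,'r,'p) conf \<Rightarrow> bool" where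
  "inv_kL c \<longleftrightarrow> (\<forall>x q. pc (lc c x) \<in> {L9,L10,L11,L12} \<and> pA (lc c x) = HProc q \<longrightarrow> \<not> (pc (lc c q) = L3 \<and> tv (lc c q) = tA (lc c x)))"

definition inv_kLS :: "('o,'s,'r,'p) conf \<Rightarrow> bool" where
  "inv_kLS c \<longleftrightarrow> (\<forall>x q. pc (lc c x) \<in> {L6,L7,L8,L9,L10,L11,L12} \<and> pS (lc c x) = HProc q \<longrightarrow> \<not> (pc (lc c q) = L3 \<and> tv (lc c q) = tS (lc c x)))"

definition inv_rS :: "('o,'s,'r,'p) conf \<Rightarrow> bool" where
  "inv_rS c \<longleftrightarrow> fst (snd (snd (Sv c))) \<noteq> Null"

definition inv_rL :: "('o,'s,'r,'p) conf \<Rightarrow> bool" where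
  "inv_rL c \<longleftrightarrow> (\<forall>x. pc (lc c x) \<in> {L6,L7,L8,L9,L10,L11,L12} \<longrightarrow> rS (lc c x) \<noteq> Null)"

definition inv_iM :: "('o,'s,'r,'p) conf \<Rightarrow> bool" where
  "inv_iM c \<longleftrightarrow> (\<forall>x q. pc (lc c x) \<in> {L7,L8,L9,L10,L11,L12} \<and> pS (lc c x) = HProc q \<longrightarrow> Hv c q \<noteq> (tS (lc c x), Null))"

definition UInv :: "('o,'s,'r,'p) conf \<Rightarrow> bool" where
  "UInv c \<longleftrightarrow> inv_ia c \<and> inv_ib c \<and> inv_ic c \<and> inv_id c \<and> inv_ie c \<and> inv_kA c \<and> inv_kS c \<and> inv_kL c \<and> inv_kLS c \<and> inv_rS c \<and> inv_rL c \<and> inv_iM c"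

lemma inv_init: "uinit s0 c \<Longrightarrow> UInv c"
  by (simp add: uinit_def UInv_def inv_ia_def inv_ib_def inv_ic_def inv_id_def inv_ie_def inv_kA_def inv_kS_def inv_kL_def inv_kLS_def inv_rS_def inv_rL_def inv_iM_def)

lemma pres_ia: assumes "ustep \<delta> p c c'" "inv_ia c" "inv_ic c" shows "inv_ia c'"
  using assms by (cases "pc (lc c p)") (auto simp: ustep_def Let_def setloc_def inv_ia_def inv_ic_def split: if_splits prod.splits ptr.splits)

lemma pres_ib: assumes "ustep \<delta> p c c'" "inv_ib c" "inv_id c" shows "inv_ib c'"
  using assms by (cases "pc (lc c p)") (auto simp: ustep_def Let_def setloc_def inv_ib_def inv_id_def split: if_splits prod.splits ptr.splits)

lemma pres_ic: assumes "ustep \<delta> p c c'" "inv_ic c" shows "inv_ic c'"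
  using assms by (cases "pc (lc c p)") (auto simp: ustep_def Let_def setloc_def inv_ic_def split: if_splits prod.splits ptr.splits)

lemma pres_id: assumes "ustep \<delta> p c c'" "inv_id c" "inv_ia c" shows "inv_id c'"
  using assms by (cases "pc (lc c p)") (auto simp: ustep_def Let_def setloc_def inv_id_def inv_ia_def split: if_splits prod.splits ptr.splits)

lemma pres_ie: assumes "ustep \<delta> p c c'" "inv_ie c" "inv_ib c" shows "inv_ie c'"
  using assms by (cases "pc (lc c p)") (auto simp: ustep_def Let_def setloc_def inv_ie_def inv_ib_def split: if_splits prod.splits ptr.splits)

lemma pres_kA: assumes "ustep \<delta> p c c'" "inv_kA c" "inv_ia c" shows "inv_kA c'"
  using assms by (cases "pc (lc c p)") (auto simp: ustep_def Let_def setloc_def inv_kA_def inv_ia_def split: if_splits prod.splits ptr.splits)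

lemma pres_kS: assumes "ustep \<delta> p c c'" "inv_kS c" "inv_ib c" "inv_kL c" shows "inv_kS c'"
  using assms by (cases "pc (lc c p)") (auto simp: ustep_def Let_def setloc_def inv_kS_def inv_ib_def inv_kL_def split: if_splits prod.splits ptr.splits)

lemma pres_kL: assumes "ustep \<delta> p c c'" "inv_kL c" "inv_id c" "inv_kA c" shows "inv_kL c'"
  using assms by (cases "pc (lc c p)") (auto simp: ustep_def Let_def setloc_def inv_kL_def inv_id_def inv_kA_def split: if_splits prod.splits ptr.splits)

lemma pres_kLS: assumes "ustep \<delta> p c c'" "inv_kLS c" "inv_ie c" "inv_kS c" shows "inv_kLS c'"
  using assms by (cases "pc (lc c p)") (auto simp: ustep_def Let_def setloc_def inv_kLS_def inv_ie_def inv_kS_def split: if_splits prod.splits ptr.splits)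

lemma pres_rS: assumes "ustep \<delta> p c c'" "inv_rS c" shows "inv_rS c'"
  using assms by (cases "pc (lc c p)") (auto simp: ustep_def Let_def setloc_def inv_rS_def split: if_splits prod.splits ptr.splits)

lemma pres_rL: assumes "ustep \<delta> p c c'" "inv_rL c" "inv_rS c" shows "inv_rL c'"
  using assms by (cases "pc (lc c p)") (auto simp: ustep_def Let_def setloc_def inv_rL_def inv_rS_def split: if_splits prod.splits ptr.splits)

lemma pres_iM: assumes "ustep \<delta> p c c'" "inv_iM c" "inv_rL c" "inv_kLS c" shows "inv_iM c'"
  using assms by (cases "pc (lc c p)") (auto simp: ustep_def Let_def setloc_def inv_iM_def inv_rL_def inv_kLS_def split: if_splits prod.splits ptr.splits)

lemma inv_pres: assumes "UInv c" "ustep \<delta> p c c'" shows "UInv c'"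
proof -
  have "inv_ia c" "inv_ib c" "inv_ic c" "inv_id c" "inv_ie c" "inv_kA c" "inv_kS c" "inv_kL c" "inv_kLS c" "inv_rS c" "inv_rL c" "inv_iM c" using assms(1) by (simp_all add: UInv_def)
  then show ?thesis unfolding UInv_def using pres_ia[OF assms(2)] pres_ib[OF assms(2)] pres_ic[OF assms(2)] pres_id[OF assms(2)] pres_ie[OF assms(2)] pres_kA[OF assms(2)] pres_kS[OF assms(2)] pres_kL[OF assms(2)] pres_kLS[OF assms(2)] pres_rS[OF assms(2)] pres_rL[OF assms(2)] pres_iM[OF assms(2)] by simp
qed

lemma inv_all: assumes "uexec \<delta> s0 \<sigma> sch n" "k \<le> n" shows "UInv (\<sigma> k)"
  using assms(2)
proof (induction k)
  case 0 then show ?case using assms(1) inv_init by (auto simp: uexec_def)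
next
  case (Suc k)
  then have "k < n" "UInv (\<sigma> k)" by auto
  moreover have "ustep \<delta> (sch k) (\<sigma> k) (\<sigma> (Suc k))" using assms(1) \<open>k < n\<close> unfolding uexec_def by blast
  ultimately show ?case using inv_pres by metis
qed



lemma step_other: "ustep \<delta> p c c' \<Longrightarrow> x \<noteq> p \<Longrightarrow> lc c' x = lc c x"
  by (cases "pc (lc c p)") (auto simp: ustep_def Let_def setloc_def split: prod.splits)

lemma step_Cv: "ustep \<delta> p c c' \<Longrightarrow> Cv c \<le> Cv c'"
  by (cases "pc (lc c p)") (auto simp: ustep_def Let_def setloc_def split: prod.splits)

lemma step_Sv: "ustep \<delta> p c c' \<Longrightarrow> Sv c' \<noteq> Sv c \<Longrightarrow>
   pc (lc c p) = L12 \<and> Sv c = (tS (lc c p), sS (lc c p), rS (lc c p), pS (lc c p))"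
  by (cases "pc (lc c p)") (auto simp: ustep_def Let_def setloc_def split: prod.splits if_splits)

lemma step_Hv: "ustep \<delta> p c c' \<Longrightarrow> Hv c' q = (t, Null) \<Longrightarrow> Hv c q \<noteq> (t, Null) \<Longrightarrow>
   p = q \<and> pc (lc c p) = L3 \<and> tv (lc c p) = t"
  by (cases "pc (lc c p)") (auto simp: ustep_def Let_def setloc_def split: prod.splits if_splits ptr.splits)

lemma step_L3: "ustep \<delta> p c c' \<Longrightarrow> pc (lc c' q) = L3 \<Longrightarrow> tv (lc c' q) = t \<Longrightarrow>
   \<not> (pc (lc c q) = L3 \<and> tv (lc c q) = t) \<Longrightarrow> p = q \<and> pc (lc c p) = L2 \<and> Cv c = t"
  by (cases "pc (lc c p)") (auto simp: ustep_def Let_def setloc_def split: prod.splits if_splits)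

lemma back12: "ustep \<delta> p c c' \<Longrightarrow> pc (lc c' p) = L12 \<Longrightarrow> pc (lc c p) = L11 \<and>
   tA (lc c' p) = tA (lc c p) \<and> pA (lc c' p) = pA (lc c p) \<and> tS (lc c' p) = tS (lc c p) \<and> pS (lc c' p) = pS (lc c p)"
  by (cases "pc (lc c p)") (auto simp: ustep_def Let_def setloc_def split: prod.splits if_splits)

lemma back11: "ustep \<delta> p c c' \<Longrightarrow> pc (lc c' p) = L11 \<Longrightarrow> pc (lc c p) = L10 \<and>
   tA (lc c' p) = tA (lc c p) \<and> pA (lc c' p) = pA (lc c p) \<and> tS (lc c' p) = tS (lc c p) \<and> pS (lc c' p) = pS (lc c p)
   \<and> th (lc c p) = tA (lc c p) \<and> rh (lc c p) = Null"
  by (cases "pc (lc c p)") (auto simp: ustep_def Let_def setloc_def split: prod.splits if_splits)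

lemma back10: "ustep \<delta> p c c' \<Longrightarrow> pc (lc c' p) = L10 \<Longrightarrow> pc (lc c p) = L9 \<and>
   tA (lc c' p) = tA (lc c p) \<and> pA (lc c' p) = pA (lc c p) \<and> tS (lc c' p) = tS (lc c p) \<and> pS (lc c' p) = pS (lc c p)
   \<and> deref (Hv c) (pA (lc c p)) = (th (lc c' p), rh (lc c' p))"
  by (cases "pc (lc c p)") (auto simp: ustep_def Let_def setloc_def split: prod.splits if_splits)

lemma back9: "ustep \<delta> p c c' \<Longrightarrow> pc (lc c' p) = L9 \<Longrightarrow> pc (lc c p) = L8 \<and>
   tS (lc c' p) = tS (lc c p) \<and> pS (lc c' p) = pS (lc c p)"
  by (cases "pc (lc c p)") (auto simp: ustep_def Let_def setloc_def split: prod.splits if_splits)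

lemma back8: "ustep \<delta> p c c' \<Longrightarrow> pc (lc c' p) = L8 \<Longrightarrow> pc (lc c p) = L7 \<and>
   tS (lc c' p) = tS (lc c p) \<and> pS (lc c' p) = pS (lc c p)"
  by (cases "pc (lc c p)") (auto simp: ustep_def Let_def setloc_def split: prod.splits if_splits)

lemma back7: "ustep \<delta> p c c' \<Longrightarrow> pc (lc c' p) = L7 \<Longrightarrow> pc (lc c p) = L6 \<and>
   tS (lc c' p) = tS (lc c p) \<and> pS (lc c' p) = pS (lc c p)"
  by (cases "pc (lc c p)") (auto simp: ustep_def Let_def setloc_def split: prod.splits if_splits)

lemma back6: "ustep \<delta> p c c' \<Longrightarrow> pc (lc c' p) = L6 \<Longrightarrow> pc (lc c p) = L5 \<and>
   tS (lc c' p) = fst (Sv c) \<and> pS (lc c' p) = snd (snd (snd (Sv c)))"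
  by (cases "pc (lc c p)") (auto simp: ustep_def Let_def setloc_def split: prod.splits if_splits)

lemma step12_true: "ustep \<delta> p c c' \<Longrightarrow> pc (lc c p) = L12 \<Longrightarrow>
   Sv c = (tS (lc c p), sS (lc c p), rS (lc c p), pS (lc c p)) \<Longrightarrow>
   Sv c' = (tA (lc c p), sN (lc c p), Resp (rN (lc c p)), pA (lc c p))"
  by (auto simp: ustep_def Let_def setloc_def)

lemma prev:
  assumes ex: "\<forall>i<n. ustep \<delta> (sch i) (\<sigma> i) (\<sigma> (Suc i))"
    and init: "\<forall>x. pc (lc (\<sigma> 0) x) = Idle"
    and "k \<le> n" "pc (lc (\<sigma> k) x) \<noteq> Idle"
  shows "\<exists>j<k. sch j = x \<and> lc (\<sigma> (Suc j)) x = lc (\<sigma> k) x \<and> (\<forall>m. j < m \<and> m < k \<longrightarrow> sch m \<noteq> x)"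
  using assms(3,4)
proof (induction k)
  case 0 then show ?case using init by simp
next
  case (Suc k)
  show ?case
  proof (cases "sch k = x")
    case True then show ?thesis by auto
  next
    case False
    have "lc (\<sigma> (Suc k)) x = lc (\<sigma> k) x"
      using step_other[of \<delta> "sch k" "\<sigma> k" "\<sigma> (Suc k)" x] ex Suc.prems False by auto
    then obtain j where "j<k" "sch j = x" "lc (\<sigma> (Suc j)) x = lc (\<sigma> k) x"
      "\<forall>m. j < m \<and> m < k \<longrightarrow> sch m \<noteq> x" using Suc by auto
    then show ?thesis using False \<open>lc (\<sigma> (Suc k)) x = lc (\<sigma> k) x\<close>
      by (metis less_SucE less_SucI)
  qed
qed

lemma first_change:
  fixes f :: "nat \<Rightarrow> 'a"
  assumes "a \<le> b" "f b \<noteq> f a"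
  shows "\<exists>u. a \<le> u \<and> u < b \<and> f u = f a \<and> f (Suc u) \<noteq> f u"
  using assms
proof (induction b)
  case 0 then show ?case by simp
next
  case (Suc b)
  show ?case
  proof (cases "a = Suc b")
    case True then show ?thesis using Suc by simp
  next
    case False
    then have "a \<le> b" using Suc by simp
    show ?thesis
    proof (cases "f b = f a")
      case True then show ?thesis using \<open>a \<le> b\<close> Suc by auto
    next
      case False then show ?thesis using Suc.IH \<open>a \<le> b\<close> less_SucI by blast
    qed
  qed
qed

lemma Cv_mono:
  assumes ex: "\<forall>i<n. ustep \<delta> (sch i) (\<sigma> i) (\<sigma> (Suc i))" and "i \<le> k" "k \<le> n"
  shows "Cv (\<sigma> i) \<le> Cv (\<sigma> k)"
  using assms(2,3)
proof (induction k rule: dec_induct)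
  case base then show ?case by simp
next
  case (step m) then show ?case using ex step_Cv[of \<delta> "sch m" "\<sigma> m" "\<sigma> (Suc m)"] by fastforce
qed

theorem mainTheorem11:
  fixes \<delta> :: "('s \<times> 'o \<times> 's \<times> 'r) set" and s0 :: 's
    and \<sigma> :: "nat \<Rightarrow> ('o,'s,'r,'p) conf" and sch :: "nat \<Rightarrow> 'p"
    and n T T' :: nat and p p' :: 'p and op :: "'p operation"
  assumes "uexec \<delta> s0 \<sigma> sch n"
    and "is_operation \<sigma> sch n op"
    and "line12_for \<sigma> sch T p op" and "gcas12_true \<sigma> T p"
    and "T < T'" and "T' < n"
    and "line12_for \<sigma> sch T' p' op"
  shows "\<exists>T1<T. exec_line \<sigma> sch T1 p' L5 \<and>
           (\<forall>k. T1 < k \<and> k < T' \<longrightarrow> \<not> exec_line \<sigma> sch k p' L5)"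
proof -
  have ex: "\<forall>i<n. ustep \<delta> (sch i) (\<sigma> i) (\<sigma> (Suc i))" and init: "\<forall>x. pc (lc (\<sigma> 0) x) = Idle"
    using assms(1) by (auto simp: uexec_def uinit_def)
  have exs: "\<And>i. i < n \<Longrightarrow> ustep \<delta> (sch i) (\<sigma> i) (\<sigma> (Suc i))" using ex by blast
  define L where "L k = lc (\<sigma> k) p'" for k
  have T'fs: "sch T' = p'" "pc (L T') = L12" "tA (L T') = t_of op" "pA (L T') = h_of op"
    using assms(7) by (auto simp: line12_for_def exec_line_def L_def)
  obtain j11 where j11: "j11 < T'" "sch j11 = p'" "L (Suc j11) = L T'" "\<forall>m. j11 < m \<and> m < T' \<longrightarrow> sch m \<noteq> p'"
    using prev[OF ex init, of T' p'] assms(6) T'fs by (auto simp: L_def)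
  have b11: "pc (L j11) = L11 \<and> tA (L T') = tA (L j11) \<and> pA (L T') = pA (L j11) \<and> tS (L T') = tS (L j11) \<and> pS (L T') = pS (L j11)"
    using back12[OF exs[of j11]] j11 T'fs assms(6) by (auto simp: L_def)
  obtain j10 where j10: "j10 < j11" "sch j10 = p'" "L (Suc j10) = L j11" "\<forall>m. j10 < m \<and> m < j11 \<longrightarrow> sch m \<noteq> p'"
    using prev[OF ex init, of j11 p'] assms(6) j11 b11 by (auto simp: L_def)
  have b10: "pc (L j10) = L10 \<and> tA (L j11) = tA (L j10) \<and> pA (L j11) = pA (L j10) \<and> tS (L j11) = tS (L j10) \<and> pS (L j11) = pS (L j10)
     \<and> th (L j10) = tA (L j10) \<and> rh (L j10) = Null"
    using back11[OF exs[of j10]] j10 j11 b11 assms(6) by (auto simp: L_def)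
  obtain j9 where j9: "j9 < j10" "sch j9 = p'" "L (Suc j9) = L j10" "\<forall>m. j9 < m \<and> m < j10 \<longrightarrow> sch m \<noteq> p'"
    using prev[OF ex init, of j10 p'] assms(6) j10 j11 b10 by (auto simp: L_def)
  have b9: "pc (L j9) = L9 \<and> tA (L j10) = tA (L j9) \<and> pA (L j10) = pA (L j9) \<and> tS (L j10) = tS (L j9) \<and> pS (L j10) = pS (L j9)
     \<and> deref (Hv (\<sigma> j9)) (pA (L j9)) = (th (L j10), rh (L j10))"
    using back10[OF exs[of j9]] j9 j10 j11 b10 assms(6) by (auto simp: L_def)
  obtain j8 where j8: "j8 < j9" "sch j8 = p'" "L (Suc j8) = L j9" "\<forall>m. j8 < m \<and> m < j9 \<longrightarrow> sch m \<noteq> p'"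
    using prev[OF ex init, of j9 p'] assms(6) j9 j10 j11 b9 by (auto simp: L_def)
  have b8: "pc (L j8) = L8 \<and> tS (L j9) = tS (L j8) \<and> pS (L j9) = pS (L j8)"
    using back9[OF exs[of j8]] j8 j9 j10 j11 b9 assms(6) by (auto simp: L_def)
  obtain j7 where j7: "j7 < j8" "sch j7 = p'" "L (Suc j7) = L j8" "\<forall>m. j7 < m \<and> m < j8 \<longrightarrow> sch m \<noteq> p'"
    using prev[OF ex init, of j8 p'] assms(6) j8 j9 j10 j11 b8 by (auto simp: L_def)
  have b7: "pc (L j7) = L7 \<and> tS (L j8) = tS (L j7) \<and> pS (L j8) = pS (L j7)"
    using back8[OF exs[of j7]] j7 j8 j9 j10 j11 b8 assms(6) by (auto simp: L_def)
  obtain j6 where j6: "j6 < j7" "sch j6 = p'" "L (Suc j6) = L j7" "\<forall>m. j6 < m \<and> m < j7 \<longrightarrow> sch m \<noteq> p'"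
    using prev[OF ex init, of j7 p'] assms(6) j7 j8 j9 j10 j11 b7 by (auto simp: L_def)
  have b6: "pc (L j6) = L6 \<and> tS (L j7) = tS (L j6) \<and> pS (L j7) = pS (L j6)"
    using back7[OF exs[of j6]] j6 j7 j8 j9 j10 j11 b7 assms(6) by (auto simp: L_def)
  obtain j5 where j5: "j5 < j6" "sch j5 = p'" "L (Suc j5) = L j6" "\<forall>m. j5 < m \<and> m < j6 \<longrightarrow> sch m \<noteq> p'"
    using prev[OF ex init, of j6 p'] assms(6) j6 j7 j8 j9 j10 j11 b6 by (auto simp: L_def)
  have b5: "pc (L j5) = L5 \<and> tS (L j6) = fst (Sv (\<sigma> j5)) \<and> pS (L j6) = snd (snd (snd (Sv (\<sigma> j5))))"
    using back6[OF exs[of j5]] j5 j6 j7 j8 j9 j10 j11 b6 assms(6) by (auto simp: L_def)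
  have ord: "j5 < j6" "j6 < j7" "j7 < j8" "j8 < j9" "j9 < j10" "j10 < j11" "j11 < T'"
    using j5 j6 j7 j8 j9 j10 j11 by auto
  have gap: "\<forall>k. j5 < k \<and> k < T' \<longrightarrow> \<not> exec_line \<sigma> sch k p' L5"
  proof (intro allI impI notI)
    fix k assume k: "j5 < k \<and> k < T'" and e: "exec_line \<sigma> sch k p' L5"
    then have s: "sch k = p'" "pc (L k) = L5" by (auto simp: exec_line_def L_def)
    have "k < j6 \<or> k = j6 \<or> (j6 < k \<and> k < j7) \<or> k = j7 \<or> (j7 < k \<and> k < j8) \<or> k = j8 \<or>
      (j8 < k \<and> k < j9) \<or> k = j9 \<or> (j9 < k \<and> k < j10) \<or> k = j10 \<or> (j10 < k \<and> k < j11) \<or> k = j11 \<or> j11 < k"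
      by linarith
    then show False using s k j5 j6 j7 j8 j9 j10 j11 b5 b6 b7 b8 b9 b10 b11 by auto
  qed
  have tSj9: "tS (L j9) = fst (Sv (\<sigma> j5))" "pS (L j9) = snd (snd (snd (Sv (\<sigma> j5))))"
    using b5 b6 b7 b8 by auto
  have derefj9: "deref (Hv (\<sigma> j9)) (h_of op) = (t_of op, Null)"
    using b9 b10 b11 T'fs by auto
  obtain q t0 where op: "op = Inv q t0"
    using derefj9 by (cases op) (auto simp: deref_def)
  have Hj9: "Hv (\<sigma> j9) q = (t0, Null)" using derefj9 op by (simp add: deref_def)
  have "j5 < T"
  proof (rule ccontr)
    assume "\<not> j5 < T"
    moreover have "j5 \<noteq> T" using assms(3) b5 j5 by (auto simp: line12_for_def exec_line_def L_def)
    ultimately have ST: "Suc T \<le> j5" by simp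
    let ?l = "lc (\<sigma> T) p"
    have Tfs: "sch T = p" "pc ?l = L12" "tA ?l = t0" "pA ?l = HProc q"
      using assms(3) op by (auto simp: line12_for_def exec_line_def)
    have ST1: "Sv (\<sigma> (Suc T)) = (t0, sN ?l, Resp (rN ?l), HProc q)"
      using step12_true[OF exs[of T]] Tfs assms(4,5,6) by (auto simp: gcas12_true_def Let_def)
    have invj9: "UInv (\<sigma> j9)" using inv_all[OF assms(1)] ord assms(6) by simp
    show False
    proof (cases "Sv (\<sigma> j5) = Sv (\<sigma> (Suc T))")
      case True
      then have "tS (L j9) = t0" "pS (L j9) = HProc q" using tSj9 ST1 by auto
      then show False using invj9 b9 Hj9 by (auto simp: UInv_def inv_iM_def L_def)
    next
      case False
      then obtain u where u: "Suc T \<le> u" "u < j5" "Sv (\<sigma> u) = Sv (\<sigma> (Suc T))" "Sv (\<sigma> (Suc u)) \<noteq> Sv (\<sigma> u)"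
        using first_change[of "Suc T" j5 "\<lambda>k. Sv (\<sigma> k)"] ST by auto
      have un: "u < n" using u ord assms(6) by simp
      let ?y = "sch u"
      have y: "pc (lc (\<sigma> u) ?y) = L12" "tS (lc (\<sigma> u) ?y) = t0" "pS (lc (\<sigma> u) ?y) = HProc q"
        using step_Sv[OF exs[OF un]] u ST1 by auto
      have "UInv (\<sigma> u)" using inv_all[OF assms(1)] un by simp
      then have Hu: "Hv (\<sigma> u) q \<noteq> (t0, Null)" using y by (auto simp: UInv_def inv_iM_def)
      have invT: "UInv (\<sigma> (Suc T))" using inv_all[OF assms(1)] assms(5,6) by simp
      have CT: "t0 < Cv (\<sigma> (Suc T))" using invT ST1 by (simp add: UInv_def inv_ib_def)
      have F: "\<not> (pc (lc (\<sigma> k) q) = L3 \<and> tv (lc (\<sigma> k) q) = t0)" if "Suc T \<le> k" "k \<le> n" for k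
        using that
      proof (induction k rule: dec_induct)
        case base then show ?case using invT ST1 by (simp add: UInv_def inv_kS_def)
      next
        case (step m)
        show ?case
        proof
          assume a: "pc (lc (\<sigma> (Suc m)) q) = L3 \<and> tv (lc (\<sigma> (Suc m)) q) = t0"
          have "m < n" using step by simp
          then have "Cv (\<sigma> m) = t0"
            using step_L3[OF exs[of m]] a step.IH step.prems by auto
          moreover have "Cv (\<sigma> (Suc T)) \<le> Cv (\<sigma> m)" using Cv_mono[OF ex] step by simp
          ultimately show False using CT by simp
        qed
      qed
      have H: "Hv (\<sigma> k) q \<noteq> (t0, Null)" if "u \<le> k" "k \<le> n" for k
        using that
      proof (induction k rule: dec_induct)
        case base then show ?case using Hu by simp
      next
        case (step m)
        show ?case
        proof
          assume a: "Hv (\<sigma> (Suc m)) q = (t0, Null)"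
          have "m < n" using step by simp
          then have "pc (lc (\<sigma> m) q) = L3 \<and> tv (lc (\<sigma> m) q) = t0"
            using step_Hv[OF exs[of m] a] step.IH by auto
          then show False using F[of m] step u by simp
        qed
      qed
      show False using H[of j9] Hj9 u ord assms(6) by simp
    qed
  qed
  then show ?thesis using gap b5 j5 by (auto simp: exec_line_def L_def)
qed

end
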